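(* For all integers $m,n\ge 0$ and every $\sigma>0$, $$0<\Lambda_{m,n}(\sigma)-\Lambda_{m,n}(0)<\frac{4}{r}\sigma .$$
   Context: Fix $r>0$ (the inradius of an equilateral triangle $T$). For integers $m,n\ge0$ and $\sigma\ge0$, let $(L,M,N)$ with $L\in(-\pi/2,0]$ and $M,N\in[0,\pi/2)$ be the unique solution of the system $$\big(2L-M-N-(m+n)\pi\big)\tan L=3r\sigma,\quad \big(2M-N-L+m\pi\big)\tan M=3r\sigma,\quad \big(2N-L-M+n\pi\big)\tan N=3r\sigma .$$ Set $\mu=\frac{2M-N-L}{\pi}+m$, $\nu=\frac{2N-L-M}{\pi}+n$, and $\Lambda_{m,n}(\sigma)=\frac{4\pi^2}{27r^2}(\mu^2+\mu\nu+\nu^2)$. In particular $\Lambda_{m,n}(0)=\frac{4\pi^2}{27r^2}(m^2+mn+n^2)$. (By McCartin's theorem the Robin spectrum of $T$ with parameter $\sigma$ consists of the numbers $\Lambda_{m,n}(\sigma)$, $0\le m\le n$, with $\Lambda_{m,n}$ counted twice for $m<n$ and once for $m=n$.) *)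

theory Defs
  imports Complex_Main
begin

text \<open>The system determining (L,M,N) for inradius r, integers m n, and Robin parameter sigma.\<close>
definition robin_sys :: "real \<Rightarrow> nat \<Rightarrow> nat \<Rightarrow> real \<Rightarrow> real \<times> real \<times> real \<Rightarrow> bool" where
  "robin_sys r m n \<sigma> LMN \<longleftrightarrow> (case LMN of (L, M, N) \<Rightarrow>
     L \<in> {-pi/2<..0} \<and> M \<in> {0..<pi/2} \<and> N \<in> {0..<pi/2} \<and>
     (2*L - M - N - (real m + real n) * pi) * tan L = 3 * r * \<sigma> \<and>
     (2*M - N - L + real m * pi) * tan M = 3 * r * \<sigma> \<and>
     (2*N - L - M + real n * pi) * tan N = 3 * r * \<sigma>)"

text \<open>The unique solution (uniqueness is a standing fact from the paper).\<close>
definition robin_LMN :: "real \<Rightarrow> nat \<Rightarrow> nat \<Rightarrow> real \<Rightarrow> real \<times> real \<times> real" where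
  "robin_LMN r m n \<sigma> = (THE LMN. robin_sys r m n \<sigma> LMN)"

definition robin_Lambda :: "real \<Rightarrow> nat \<Rightarrow> nat \<Rightarrow> real \<Rightarrow> real" where
  "robin_Lambda r m n \<sigma> = (case robin_LMN r m n \<sigma> of (L, M, N) \<Rightarrow>
     let \<mu> = (2*M - N - L) / pi + real m;
         \<nu> = (2*N - L - M) / pi + real n
     in 4 * pi^2 / (27 * r^2) * (\<mu>^2 + \<mu>*\<nu> + \<nu>^2))"

end

theory Submission imports Defs "HOL-Analysis.Analysis" begin

lemma x_less_tan:
  fixes x :: real assumes "0 < x" "x < pi/2" shows "x < tan x"
proof -
  have "\<exists>z. 0 < z \<and> z < x \<and> tan x - tan 0 = (x - 0) * inverse ((cos z)\<^sup>2)"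
    apply (rule MVT2[OF assms(1)])
    apply (rule DERIV_tan)
    using assms cos_gt_zero_pi[of _] by (metis (no_types) less_eq_real_def cos_gt_zero_pi
        order_le_less_trans order_less_le_trans minus_less_iff pi_half_gt_zero neg_less_0_iff_less less_irrefl)
  then obtain z where z: "0 < z" "z < x" "tan x = x * inverse ((cos z)\<^sup>2)" by auto
  have c0: "0 < cos z" using z assms by (intro cos_gt_zero_pi) auto
  have c1: "cos z < 1" using cos_monotone_0_pi[of 0 z] z assms by auto
  have "(cos z)\<^sup>2 < 1" using mult_strict_mono[of "cos z" 1 "cos z" 1] c0 c1 by (simp add: power2_eq_square)
  then have "1 < inverse ((cos z)\<^sup>2)" using c0 by (simp add: one_less_inverse)
  then show ?thesis using z assms by simp
qed

lemma cot_strict_dec: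
  fixes x y :: real assumes "0 < x" "x < y" "y \<le> pi/2"
  shows "cos y / sin y < cos x / sin x"
proof -
  have sx: "0 < sin x" using assms by (intro sin_gt_zero) auto
  have sy: "0 < sin y" using assms by (intro sin_gt_zero) auto
  have "0 < sin (y - x)" using assms by (intro sin_gt_zero) auto
  then have "cos y * sin x < cos x * sin y" by (simp add: sin_diff algebra_simps)
  then show ?thesis using sx sy by (simp add: divide_simps)
qed

definition hh :: "real \<Rightarrow> real \<Rightarrow> real" where
  "hh s x = s * (cos x / sin x) - 3 * x"

lemma hh_strict:
  assumes "s > 0" "0 < x" "x < y" "y \<le> pi/2"
  shows "3 * (y - x) < hh s x - hh s y"
proof -
  have "s * (cos y / sin y) < s * (cos x / sin x)"
    by (rule mult_strict_left_mono[OF cot_strict_dec[OF assms(2-4)] assms(1)])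
  then show ?thesis unfolding hh_def by argo
qed

lemma hh_pi2: "hh s (pi/2) = - 3 * pi / 2" unfolding hh_def by simp

lemma hh_ex:
  assumes "s > 0"
  shows "\<exists>x. 0 < x \<and> x \<le> pi/2 \<and> hh s x = max t (- 3 * pi / 2)"
proof -
  define T where "T = max t (- 3 * pi / 2)"
  define e where "e = min 1 (s / (2 * (\<bar>T\<bar> + 3)))"
  have e0: "0 < e" using assms by (simp add: e_def)
  have e1: "e \<le> 1" by (simp add: e_def)
  have pi3: "1 \<le> pi / 3" using pi_gt3 by simp
  have ce: "1/2 \<le> cos e" using cos_monotone_0_pi_le[of e "pi/3"] e0 e1 pi3 cos_60 by auto
  have se: "0 < sin e" "sin e \<le> e" using e0 e1 pi_gt3 by (auto intro: sin_gt_zero sin_x_le_x)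
  have "1 / (2 * e) \<le> cos e / sin e"
  proof -
    have "1 / (2*e) \<le> (1/2) / sin e" using se e0 by (simp add: divide_simps)
    also have "\<dots> \<le> cos e / sin e" using ce se by (intro divide_right_mono) auto
    finally show ?thesis .
  qed
  then have "s * (1 / (2 * e)) \<le> s * (cos e / sin e)" by (rule mult_left_mono) (use assms in auto)
  moreover have "\<bar>T\<bar> + 3 \<le> s * (1 / (2 * e))"
  proof -
    have "e \<le> s / (2 * (\<bar>T\<bar> + 3))" by (simp add: e_def)
    then have "e * (2 * (\<bar>T\<bar> + 3)) \<le> s" by (simp add: divide_simps split: if_splits)
    then show ?thesis using e0 by (simp add: divide_simps algebra_simps)
  qed
  ultimately have hT: "T \<le> hh s e" unfolding hh_def using e1 by linarith
  have cont: "continuous_on {e..pi/2} (hh s)"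
  proof -
    have "\<And>x. x \<in> {e..pi/2} \<Longrightarrow> sin x \<noteq> 0"
    proof -
      fix x assume "x \<in> {e..pi/2}"
      then have "0 < x" "x < pi" using e0 pi_gt_zero by auto
      then show "sin x \<noteq> 0" using sin_gt_zero by fastforce
    qed
    then show ?thesis unfolding hh_def by (intro continuous_intros) auto
  qed
  have "e \<le> pi/2" using e1 pi_gt3 by simp
  from IVT2'[of "hh s" "pi/2" T e, OF _ hT this cont]
  obtain x where "e \<le> x" "x \<le> pi/2" "hh s x = T" using hh_pi2 T_def by auto
  then show ?thesis using e0 T_def by (intro exI[of _ x]) auto
qed

definition XX :: "real \<Rightarrow> real \<Rightarrow> real" where
  "XX s t = (SOME x. 0 < x \<and> x \<le> pi/2 \<and> hh s x = max t (- 3 * pi / 2))"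

lemma XX: assumes "s > 0"
  shows "0 < XX s t" "XX s t \<le> pi/2" "hh s (XX s t) = max t (- 3 * pi / 2)"
proof -
  have "0 < XX s t \<and> XX s t \<le> pi/2 \<and> hh s (XX s t) = max t (- 3 * pi / 2)"
    unfolding XX_def by (rule someI_ex[OF hh_ex[OF assms]])
  then show "0 < XX s t" "XX s t \<le> pi/2" "hh s (XX s t) = max t (- 3 * pi / 2)" by auto
qed

lemma XX_mono:
  assumes "s > 0" "t1 < t2"
  shows "XX s t2 \<le> XX s t1 \<and> 3 * (XX s t1 - XX s t2) < t2 - t1"
proof -
  define x1 where "x1 = XX s t1"
  define x2 where "x2 = XX s t2"
  note X1 = XX[OF assms(1), of t1, folded x1_def]
  note X2 = XX[OF assms(1), of t2, folded x2_def]
  have u: "max t1 (- 3 * pi / 2) \<le> max t2 (- 3 * pi / 2)"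
          "max t2 (- 3 * pi / 2) - max t1 (- 3 * pi / 2) \<le> t2 - t1" using assms by auto
  have le: "x2 \<le> x1"
  proof (rule ccontr)
    assume "\<not> x2 \<le> x1"
    then have "3 * (x2 - x1) < hh s x1 - hh s x2" using hh_strict[OF assms(1) X1(1), of x2] X2 by auto
    moreover have "hh s x1 - hh s x2 \<le> 0" using X1(3) X2(3) u(1) by simp
    ultimately show False using \<open>\<not> x2 \<le> x1\<close> by (smt (verit))
  qed
  show ?thesis
  proof (cases "x2 = x1")
    case True then show ?thesis using assms by (simp add: x1_def x2_def)
  next
    case False
    then have "x2 < x1" using le by auto
    then have "3 * (x1 - x2) < hh s x2 - hh s x1" using hh_strict[OF assms(1) X2(1), of x1] X1 by auto
    then show ?thesis using X1 X2 u le by (auto simp: x1_def x2_def)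
  qed
qed

lemma XX_lip: assumes "s > 0" shows "dist (XX s a) (XX s b) \<le> 1/3 * dist a b"
proof -
  consider "a < b" | "a = b" | "b < a" by linarith
  then show ?thesis
  proof cases
    case 1 then show ?thesis using XX_mono[OF assms 1] by (simp add: dist_real_def)
  next
    case 2 then show ?thesis by simp
  next
    case 3 then show ?thesis using XX_mono[OF assms 3] by (simp add: dist_real_def)
  qed
qed

lemma XX_cont: assumes "s > 0" shows "continuous_on UNIV (XX s)"
  by (rule lipschitz_on_continuous_on[of "1/3"]) (rule lipschitz_onI, rule XX_lip[OF assms], simp)

lemma XX_cont': assumes "s > 0" "continuous_on A f" shows "continuous_on A (\<lambda>x. XX s (f x))"
  by (rule continuous_on_compose2[OF XX_cont[OF assms(1)] assms(2)]) auto

lemma XX_less: assumes "s > 0" "t > - 3 * pi / 2"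
  shows "XX s t < pi/2" "hh s (XX s t) = t"
proof -
  show h: "hh s (XX s t) = t" using XX(3)[OF assms(1), of t] assms by auto
  show "XX s t < pi/2"
  proof (rule ccontr)
    assume "\<not> XX s t < pi/2"
    then have "XX s t = pi/2" using XX(2)[OF assms(1), of t] by auto
    then have "hh s (pi/2) = t" using h by metis
    then show False using hh_pi2[of s] assms by auto
  qed
qed

lemma XX_eq: assumes "s > 0" "0 < x" "x < pi/2" "hh s x = t"
  shows "XX s t = x"
proof -
  have "3 * (pi/2 - x) < hh s x - hh s (pi/2)" using hh_strict[OF assms(1,2,3)] by simp
  then have t: "t > - 3 * pi / 2" using assms hh_pi2[of s] by auto
  note Y = XX_less[OF assms(1) t] XX(1)[OF assms(1), of t]
  show ?thesis
  proof (rule ccontr)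
    assume "XX s t \<noteq> x"
    then consider "XX s t < x" | "x < XX s t" by linarith
    then show False
    proof cases
      case 1 then show ?thesis using hh_strict[OF assms(1) Y(3) 1] assms Y by auto
    next
      case 2 then show ?thesis using hh_strict[OF assms(1,2) 2] assms Y by auto
    qed
  qed
qed

lemma tan_rel:
  fixes x a s :: real
  assumes "- (pi/2) < x" "x < pi/2" "a * tan x = s" "s \<noteq> 0"
  shows "sin x \<noteq> 0" "a = s * (cos x / sin x)"
proof -
  have c: "cos x > 0" using assms by (intro cos_gt_zero_pi) auto
  show sx: "sin x \<noteq> 0" using assms by (auto simp: tan_def)
  show "a = s * (cos x / sin x)" using assms(3) c sx by (auto simp: tan_def field_simps)
qed

lemma tan_rel2:
  fixes x a s :: real
  assumes "- (pi/2) < x" "x < pi/2" "sin x \<noteq> 0" "a = s * (cos x / sin x)"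
  shows "a * tan x = s"
proof -
  have c: "cos x > 0" using assms by (intro cos_gt_zero_pi) auto
  then show ?thesis using assms by (auto simp: tan_def field_simps)
qed

definition sysS :: "real \<Rightarrow> nat \<Rightarrow> nat \<Rightarrow> real \<Rightarrow> real \<Rightarrow> real \<Rightarrow> bool" where
  "sysS s m n L M N \<longleftrightarrow> - (pi/2) < L \<and> L \<le> 0 \<and> 0 \<le> M \<and> M < pi/2 \<and> 0 \<le> N \<and> N < pi/2 \<and>
     (2*L - M - N - (real m + real n) * pi) * tan L = s \<and>
     (2*M - N - L + real m * pi) * tan M = s \<and>
     (2*N - L - M + real n * pi) * tan N = s"

lemma robin_sys_iff: "robin_sys r m n \<sigma> (L, M, N) \<longleftrightarrow> sysS (3 * r * \<sigma>) m n L M N"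
  unfolding robin_sys_def sysS_def by auto

lemma sys_char:
  assumes "s > 0" "sysS s m n L M N"
  shows "L < 0" "0 < M" "0 < N"
    "hh s M = real m * pi - (L + M + N)"
    "hh s N = real n * pi - (L + M + N)"
    "hh s (-L) = (L + M + N) + (real m + real n) * pi"
    "L * (2*L - M - N - (real m + real n) * pi) < s"
    "M * (2*M - N - L + real m * pi) < s"
    "N * (2*N - L - M + real n * pi) < s"
proof -
  note S = assms(2)[unfolded sysS_def]
  have tL: "sin L \<noteq> 0" "(2*L - M - N - (real m + real n) * pi) = s * (cos L / sin L)"
    using tan_rel[of L "2*L - M - N - (real m + real n) * pi" s] S assms(1) by auto
  have tM: "sin M \<noteq> 0" "(2*M - N - L + real m * pi) = s * (cos M / sin M)"
    using tan_rel[of M "2*M - N - L + real m * pi" s] S assms(1) by auto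
  have tN: "sin N \<noteq> 0" "(2*N - L - M + real n * pi) = s * (cos N / sin N)"
    using tan_rel[of N "2*N - L - M + real n * pi" s] S assms(1) by auto
  show L0: "L < 0" using S tL by (cases "L = 0") auto
  show M0: "0 < M" using S tM by (cases "M = 0") auto
  show N0: "0 < N" using S tN by (cases "N = 0") auto
  show "hh s M = real m * pi - (L + M + N)" using tM by (simp add: hh_def)
  show "hh s N = real n * pi - (L + M + N)" using tN by (simp add: hh_def)
  show "hh s (-L) = (L + M + N) + (real m + real n) * pi" using tL by (simp add: hh_def)
  have tanL: "tan L < L" using x_less_tan[of "-L"] L0 S by (auto simp: tan_minus)
  have tanM: "M < tan M" using x_less_tan[of M] M0 S by auto
  have tanN: "N < tan N" using x_less_tan[of N] N0 S by auto
  have tLn: "tan L < 0" using tan_less_zero[of L] L0 S by auto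
  have tMp: "tan M > 0" using tan_gt_zero[of M] M0 S by auto
  have tNp: "tan N > 0" using tan_gt_zero[of N] N0 S by auto
  define a where "a = 2*L - M - N - (real m + real n) * pi"
  define b where "b = 2*M - N - L + real m * pi"
  define c where "c = 2*N - L - M + real n * pi"
  have ea: "a * tan L = s" "b * tan M = s" "c * tan N = s" using S by (auto simp: a_def b_def c_def)
  have "a < 0" using ea(1) tLn assms(1) mult_nonneg_nonpos[of a "tan L"] by linarith
  then have "a * (L - tan L) < 0" using tanL by (intro mult_neg_pos) auto
  then show "L * (2*L - M - N - (real m + real n) * pi) < s" using ea(1) unfolding a_def[symmetric]
    by (simp add: algebra_simps)
  have "b > 0" using ea(2) tMp assms(1) by (metis zero_less_mult_pos2)
  then have "b * (M - tan M) < 0" using tanM by (intro mult_pos_neg) auto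
  then show "M * (2*M - N - L + real m * pi) < s" using ea(2) unfolding b_def[symmetric]
    by (simp add: algebra_simps)
  have "c > 0" using ea(3) tNp assms(1) by (metis zero_less_mult_pos2)
  then have "c * (N - tan N) < 0" using tanN by (intro mult_pos_neg) auto
  then show "N * (2*N - L - M + real n * pi) < s" using ea(3) unfolding c_def[symmetric]
    by (simp add: algebra_simps)
qed

definition gg :: "real \<Rightarrow> nat \<Rightarrow> nat \<Rightarrow> real \<Rightarrow> real" where
  "gg s m n S = - XX s (S + (real m + real n) * pi) + XX s (real m * pi - S) + XX s (real n * pi - S) - S"

lemma sys_XX:
  assumes "s > 0" "sysS s m n L M N"
  shows "M = XX s (real m * pi - (L + M + N))" "N = XX s (real n * pi - (L + M + N))"
    "L = - XX s ((L + M + N) + (real m + real n) * pi)" "gg s m n (L + M + N) = 0"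
proof -
  note C = sys_char[OF assms]
  note S = assms(2)[unfolded sysS_def]
  show 1: "M = XX s (real m * pi - (L + M + N))" using XX_eq[OF assms(1) C(2) _ C(4)] S by auto
  show 2: "N = XX s (real n * pi - (L + M + N))" using XX_eq[OF assms(1) C(3) _ C(5)] S by auto
  have "XX s ((L + M + N) + (real m + real n) * pi) = -L" using XX_eq[OF assms(1) _ _ C(6)] S C(1) by auto
  then show 3: "L = - XX s ((L + M + N) + (real m + real n) * pi)" by simp
  show "gg s m n (L + M + N) = 0" unfolding gg_def using 1 2 3 by (smt (verit))
qed

lemma gg_dec:
  assumes "s > 0" "S < T"
  shows "gg s m n T < gg s m n S"
proof -
  have 1: "3 * (XX s (S + (real m + real n) * pi) - XX s (T + (real m + real n) * pi)) < T - S"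
    using XX_mono[OF assms(1), of "S + (real m + real n) * pi" "T + (real m + real n) * pi"] assms by auto
  have 2: "3 * (XX s (real m * pi - T) - XX s (real m * pi - S)) < T - S"
    using XX_mono[OF assms(1), of "real m * pi - T" "real m * pi - S"] assms by auto
  have 3: "3 * (XX s (real n * pi - T) - XX s (real n * pi - S)) < T - S"
    using XX_mono[OF assms(1), of "real n * pi - T" "real n * pi - S"] assms by auto
  show ?thesis unfolding gg_def using 1 2 3 by (smt (verit))
qed

lemma sys_unique:
  assumes "s > 0" "sysS s m n L M N" "sysS s m n L' M' N'"
  shows "(L, M, N) = (L', M', N')"
proof -
  note A = sys_XX[OF assms(1,2)]
  note B = sys_XX[OF assms(1,3)]
  have "L + M + N = L' + M' + N'"
  proof (rule ccontr)
    assume "L + M + N \<noteq> L' + M' + N'"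
    then consider "L + M + N < L' + M' + N'" | "L' + M' + N' < L + M + N" by linarith
    then show False
    proof cases
      case 1 then show ?thesis using gg_dec[OF assms(1) 1, of m n] A(4) B(4) by simp
    next
      case 2 then show ?thesis using gg_dec[OF assms(1) 2, of m n] A(4) B(4) by simp
    qed
  qed
  note e = this
  have "M = M'" using HOL.trans[OF A(1)[unfolded e] B(1)[symmetric]] .
  moreover have "N = N'" using HOL.trans[OF A(2)[unfolded e] B(2)[symmetric]] .
  moreover have "L = L'" using HOL.trans[OF A(3)[unfolded e] B(3)[symmetric]] .
  ultimately show ?thesis by simp
qed

lemma aux_a: "0 < f A \<Longrightarrow> f B \<le> pi/2 \<Longrightarrow> f C \<le> pi/2 \<Longrightarrow> - f A + f B + f C - 2*pi \<le> 0"
  using pi_gt_zero by linarith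
lemma aux_b: "f A \<le> pi/2 \<Longrightarrow> 0 < f B \<Longrightarrow> 0 < f C \<Longrightarrow> 0 \<le> - f A + f B + f C - - pi"
  using pi_gt_zero by linarith

lemma sys_exists:
  assumes "s > 0"
  shows "\<exists>L M N. sysS s m n L M N"
proof -
  have cont: "continuous_on {-pi..2*pi} (gg s m n)"
    unfolding gg_def by (intro continuous_intros XX_cont'[OF assms])
  have X0: "\<And>t. 0 < XX s t" "\<And>t. XX s t \<le> pi/2" using XX[OF assms] by auto
  have a: "gg s m n (2*pi) \<le> 0" unfolding gg_def
    by (rule aux_a[of "XX s"]) (use X0 in auto)
  have b: "0 \<le> gg s m n (-pi)" unfolding gg_def
    by (rule aux_b[of "XX s"]) (use X0 in auto)
  obtain S where "gg s m n S = 0" using IVT2'[of "gg s m n" "2*pi" 0 "-pi", OF a b _ cont] by auto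
  define L where "L = - XX s (S + (real m + real n) * pi)"
  define M where "M = XX s (real m * pi - S)"
  define N where "N = XX s (real n * pi - S)"
  have SS: "S = L + M + N" using \<open>gg s m n S = 0\<close> unfolding gg_def L_def M_def N_def by (smt (verit))
  have L0: "L < 0" "- (pi/2) \<le> L" unfolding L_def
    using X0(1)[of "S + (real m + real n) * pi"] X0(2)[of "S + (real m + real n) * pi"] by linarith+
  have M0: "0 < M" "M \<le> pi/2" using X0 M_def by auto
  have N0: "0 < N" "N \<le> pi/2" using X0 N_def by auto
  have pm: "0 \<le> real m * pi" "0 \<le> real n * pi" by auto
  have tm: "real m * pi - S > - 3 * pi / 2" using SS L0 M0 N0 pm pi_gt_zero by linarith
  have tn: "real n * pi - S > - 3 * pi / 2" using SS L0 M0 N0 pm pi_gt_zero by linarith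
  have dd: "(real m + real n) * pi = real m * pi + real n * pi" by (simp add: distrib_right)
  have tl: "S + (real m + real n) * pi > - 3 * pi / 2" using SS L0 M0 N0 pm pi_gt_zero dd
    by linarith
  note XM = XX_less[OF assms tm, folded M_def]
  note XN = XX_less[OF assms tn, folded N_def]
  note XL = XX_less[OF assms tl]
  have XL': "- L < pi/2" "hh s (- L) = S + (real m + real n) * pi" using XL L_def by auto
  have sM: "sin M \<noteq> 0" using M0 XM sin_gt_zero[of M] pi_gt_zero by auto
  have sN: "sin N \<noteq> 0" using N0 XN sin_gt_zero[of N] pi_gt_zero by auto
  have sL: "sin L \<noteq> 0" using L0 XL' sin_gt_zero[of "-L"] by auto
  have eM: "(2*M - N - L + real m * pi) * tan M = s"
    by (rule tan_rel2) (use M0 XM sM SS in \<open>auto simp: hh_def\<close>)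
  have eN: "(2*N - L - M + real n * pi) * tan N = s"
    by (rule tan_rel2) (use N0 XN sN SS in \<open>auto simp: hh_def\<close>)
  have eL: "(2*L - M - N - (real m + real n) * pi) * tan L = s"
    by (rule tan_rel2) (use L0 XL' sL SS in \<open>auto simp: hh_def\<close>)
  have "sysS s m n L M N" unfolding sysS_def using eM eN eL L0 M0 N0 XM XN XL' by auto
  then show ?thesis by blast
qed


lemma tan_zero_iff:
  fixes x :: real assumes "- (pi/2) < x" "x < pi/2" "tan x = 0" shows "x = 0"
proof -
  have "cos x > 0" using assms by (intro cos_gt_zero_pi) auto
  then have "sin x = 0" using assms(3) by (simp add: tan_eq_0_cos_sin)
  then show ?thesis using sin_eq_0_pi[of x] assms by auto
qed

lemma sys_zero:
  assumes "sysS 0 m n L M N" shows "L = 0" "M = 0" "N = 0"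
proof -
  note S = assms[unfolded sysS_def]
  have pm: "0 \<le> real m * pi" "0 \<le> real n * pi" by auto
  have dd: "(real m + real n) * pi = real m * pi + real n * pi" by (simp add: distrib_right)
  show L0: "L = 0"
  proof (rule ccontr)
    assume "L \<noteq> 0"
    then have "tan L \<noteq> 0" using tan_zero_iff[of L] S by auto
    moreover have "2*L - M - N - (real m + real n) * pi \<noteq> 0" using S \<open>L \<noteq> 0\<close> pm dd by linarith
    ultimately show False using S by simp
  qed
  have hM: "M \<noteq> 0 \<Longrightarrow> 2*M - N + real m * pi = 0"
  proof -
    assume "M \<noteq> 0"
    then have "tan M \<noteq> 0" using tan_zero_iff[of M] S by auto
    then show ?thesis using S L0 by simp
  qed
  have hN: "N \<noteq> 0 \<Longrightarrow> 2*N - M + real n * pi = 0"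
  proof -
    assume "N \<noteq> 0"
    then have "tan N \<noteq> 0" using tan_zero_iff[of N] S by auto
    then show ?thesis using S L0 by simp
  qed
  show "M = 0" using hM hN S pm by (cases "M = 0"; cases "N = 0") linarith+
  show "N = 0" using hM hN S pm by (cases "M = 0"; cases "N = 0") linarith+
qed

lemma aux_c: "(x::real) = 3 * y - q \<Longrightarrow> y < 3 * s \<Longrightarrow> 0 < q \<Longrightarrow> x < 9 * s" by linarith

lemma bounds:
  assumes "s > 0" "sysS s m n L M N"
  shows "0 < pi^2 * ((((2*M - N - L)/pi + real m)^2 + ((2*M - N - L)/pi + real m) * ((2*N - L - M)/pi + real n)
            + ((2*N - L - M)/pi + real n)^2) - (real m^2 + real m * real n + real n^2))"
    "pi^2 * ((((2*M - N - L)/pi + real m)^2 + ((2*M - N - L)/pi + real m) * ((2*N - L - M)/pi + real n)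
            + ((2*N - L - M)/pi + real n)^2) - (real m^2 + real m * real n + real n^2)) < 9 * s"
proof -
  note C = sys_char[OF assms]
  define mu where "mu = (2*M - N - L)/pi + real m"
  define nu where "nu = (2*N - L - M)/pi + real n"
  define a where "a = 2*L - M - N - (real m + real n) * pi"
  define b where "b = 2*M - N - L + real m * pi"
  define c where "c = 2*N - L - M + real n * pi"
  define Db where "Db = 2*M - N - L"
  define Dc where "Dc = 2*N - L - M"
  define Q where "Q = Db^2 + Db*Dc + Dc^2"
  have pmu: "pi*mu = b" unfolding mu_def b_def by (simp add: field_simps)
  have pnu: "pi*nu = c" unfolding nu_def c_def by (simp add: field_simps)
  have E0: "pi^2 * ((mu^2 + mu*nu + nu^2) - (real m^2 + real m * real n + real n^2))
      = (pi*mu)^2 + (pi*mu)*(pi*nu) + (pi*nu)^2 - ((real m*pi)^2 + (real m*pi)*(real n*pi) + (real n*pi)^2)"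
    by (simp add: power2_eq_square algebra_simps)
  have E1: "b^2 + b*c + c^2 - ((real m*pi)^2 + (real m*pi)*(real n*pi) + (real n*pi)^2)
      = 3 * pi * (real m * M + real n * N - (real m + real n) * L) + Q"
    unfolding b_def c_def Q_def Db_def Dc_def by (simp add: power2_eq_square algebra_simps)
  have E2: "b^2 + b*c + c^2 - ((real m*pi)^2 + (real m*pi)*(real n*pi) + (real n*pi)^2)
      = 3 * (L * a + M * b + N * c) - Q"
    unfolding a_def b_def c_def Q_def Db_def Dc_def by (simp add: power2_eq_square algebra_simps)
  have Q4: "4 * Q = (2*Db + Dc)^2 + 3 * Dc^2" unfolding Q_def by (simp add: power2_eq_square algebra_simps)
  have Qpos: "0 < Q"
  proof (cases "Dc = 0")
    case True
    then have "Db \<noteq> 0" using C(1,2) unfolding Db_def Dc_def by linarith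
    then show ?thesis using True Q_def by simp
  next
    case False
    then have "0 < 3 * Dc^2" by simp
    moreover have "0 \<le> (2*Db + Dc)^2" by simp
    ultimately show ?thesis using Q4 by linarith
  qed
  have nn: "0 \<le> real m * M + real n * N - (real m + real n) * L"
  proof -
    have "0 \<le> real m * M" "0 \<le> real n * N" using C by auto
    moreover have "(real m + real n) * L \<le> 0" using C(1) by (simp add: mult_nonneg_nonpos)
    ultimately show ?thesis by linarith
  qed
  have "0 \<le> 3 * pi * (real m * M + real n * N - (real m + real n) * L)" using nn by simp
  then show "0 < pi^2 * ((((2*M - N - L)/pi + real m)^2 + ((2*M - N - L)/pi + real m) * ((2*N - L - M)/pi + real n)
            + ((2*N - L - M)/pi + real n)^2) - (real m^2 + real m * real n + real n^2))"
    using E0 E1 Qpos unfolding pmu pnu mu_def[symmetric] nu_def[symmetric] by linarith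
  have "L * a < s" "M * b < s" "N * c < s" using C(7-9) unfolding a_def b_def c_def by auto
  then have T: "L * a + M * b + N * c < 3 * s" by linarith
  have E3: "pi^2 * ((mu^2 + mu*nu + nu^2) - (real m^2 + real m * real n + real n^2))
      = 3 * (L * a + M * b + N * c) - Q" using E0 E2 unfolding pmu pnu by simp
  show "pi^2 * ((((2*M - N - L)/pi + real m)^2 + ((2*M - N - L)/pi + real m) * ((2*N - L - M)/pi + real n)
            + ((2*N - L - M)/pi + real n)^2) - (real m^2 + real m * real n + real n^2)) < 9 * s"
    unfolding mu_def[symmetric] nu_def[symmetric] by (rule aux_c[OF E3 T Qpos])
qed

theorem mainTheorem2:
  fixes r \<sigma> :: real and m n :: nat
  assumes "r > 0" and "\<sigma> > 0"
  shows "0 < robin_Lambda r m n \<sigma> - robin_Lambda r m n 0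
       \<and> robin_Lambda r m n \<sigma> - robin_Lambda r m n 0 < 4 / r * \<sigma>"
proof -
  define s where "s = 3 * r * \<sigma>"
  have s0: "s > 0" using assms by (simp add: s_def)
  obtain L M N where sol: "sysS s m n L M N" using sys_exists[OF s0] by blast
  have LMN: "robin_LMN r m n \<sigma> = (L, M, N)"
    unfolding robin_LMN_def
  proof (rule the_equality)
    show "robin_sys r m n \<sigma> (L, M, N)" using sol by (simp add: robin_sys_iff s_def)
    fix p assume "robin_sys r m n \<sigma> p"
    then obtain L' M' N' where p: "p = (L', M', N')" "sysS s m n L' M' N'"
      by (cases p) (auto simp: robin_sys_iff s_def)
    show "p = (L, M, N)" using sys_unique[OF s0 p(2) sol] p(1) by simp
  qed
  have Z: "robin_LMN r m n 0 = (0, 0, 0)"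
    unfolding robin_LMN_def
  proof (rule the_equality)
    show "robin_sys r m n 0 (0, 0, 0)" by (simp add: robin_sys_iff sysS_def)
    fix p assume "robin_sys r m n 0 p"
    then obtain L' M' N' where p: "p = (L', M', N')" "sysS 0 m n L' M' N'"
      by (cases p) (auto simp: robin_sys_iff)
    show "p = (0, 0, 0)" using sys_zero[OF p(2)] p(1) by simp
  qed
  define P where "P = ((((2*M - N - L)/pi + real m)^2 + ((2*M - N - L)/pi + real m) * ((2*N - L - M)/pi + real n)
            + ((2*N - L - M)/pi + real n)^2) - (real m^2 + real m * real n + real n^2))"
  have R1: "robin_Lambda r m n \<sigma> = 4 * pi^2 / (27 * r^2) * ((((2*M - N - L)/pi + real m)^2 + ((2*M - N - L)/pi + real m) * ((2*N - L - M)/pi + real n)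
            + ((2*N - L - M)/pi + real n)^2))"
    unfolding robin_Lambda_def LMN by (simp only: Let_def prod.case)
  have R0: "robin_Lambda r m n 0 = 4 * pi^2 / (27 * r^2) * (real m^2 + real m * real n + real n^2)"
    unfolding robin_Lambda_def Z by (simp add: Let_def)
  have D: "robin_Lambda r m n \<sigma> - robin_Lambda r m n 0 = 4 * pi^2 / (27 * r^2) * P"
    unfolding R1 R0 P_def by (simp only: right_diff_distrib)
  note B = bounds[OF s0 sol, folded P_def]
  have P0: "0 < P" using B(1) by (simp add: zero_less_mult_iff)
  have "4 * pi^2 / (27 * r^2) * P = 4 / (27 * r^2) * (pi^2 * P)" by simp
  also have "\<dots> < 4 / (27 * r^2) * (9 * s)" using B(2) assms by (intro mult_strict_left_mono) auto
  also have "\<dots> = 4 / r * \<sigma>" using assms by (simp add: s_def power2_eq_square field_simps)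
  finally have U: "4 * pi^2 / (27 * r^2) * P < 4 / r * \<sigma>" .
  have "0 < 4 * pi^2 / (27 * r^2) * P" using P0 assms by simp
  then show ?thesis using D U by simp
qed

end
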